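(* (i) For any positive integers $v_1, v_2$, either $\mathrm{ML}(v_1,v_2)=\frac{s}{2s+1}$ for some $s\in\mathbb{N}$, or $\mathrm{ML}(v_1,v_2)=\frac12$. (ii) For any positive integers $v_1,v_2,v_3$, either $\mathrm{ML}(v_1,v_2,v_3)=\frac{s}{3s+1}$ for some $s\in\mathbb{N}$, or $\mathrm{ML}(v_1,v_2,v_3)\ge \frac13$.
   Context: For a real number $x$, $\Vert x\Vert$ denotes the distance from $x$ to the nearest integer. For positive integers $v_1,\ldots,v_n$, the maximum loneliness is $\mathrm{ML}(v_1,\ldots,v_n)=\max_{t\in\mathbb{R}}\min_{1\le i\le n}\Vert t v_i\Vert$. Here $\mathbb{N}=\{1,2,3,\ldots\}$. *)

theory Defs
  imports "HOL-Analysis.Analysis"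
begin

definition dist_int :: "real \<Rightarrow> real" where
  "dist_int x = min (x - of_int \<lfloor>x\<rfloor>) (of_int \<lceil>x\<rceil> - x)"

text \<open>The maximum is attained (continuous periodic function), so Sup equals max.\<close>
definition max_loneliness :: "nat list \<Rightarrow> real" where
  "max_loneliness vs = (SUP t \<in> (UNIV::real set). Min ((\<lambda>v. dist_int (t * real v)) ` set vs))"

end

theory Submission
  imports Defs "HOL-Number_Theory.Number_Theory"
begin


definition nd :: "int \<Rightarrow> int \<Rightarrow> int" where "nd Q x = min (x mod Q) (Q - x mod Q)"

lemma nd_cong: "x mod Q = y mod Q \<Longrightarrow> nd Q x = nd Q y" by (simp add: nd_def)

lemma nd_cong': "[x = y] (mod Q) \<Longrightarrow> nd Q x = nd Q y" by (simp add: nd_def cong_def)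

lemma nd_neg: "Q > 0 \<Longrightarrow> nd Q (-x) = nd Q x"
  by (auto simp: nd_def zmod_zminus1_eq_if)

lemma nd_nonneg: "Q > 0 \<Longrightarrow> 0 \<le> nd Q x"
  by (simp add: nd_def order_less_imp_le)

lemma nd_gt: "0 \<le> x \<Longrightarrow> r < x \<Longrightarrow> x < Q - r \<Longrightarrow> 0 \<le> r \<Longrightarrow> r < nd Q x"
  by (simp add: nd_def)

lemma nd_ge: "0 \<le> x \<Longrightarrow> r \<le> x \<Longrightarrow> x \<le> Q - r \<Longrightarrow> 0 < r \<Longrightarrow> r \<le> nd Q x"
  by (simp add: nd_def)

lemma nd_scale: "g > 0 \<Longrightarrow> nd (g*Q) (g*x) = g * nd Q x"
  by (simp add: nd_def mod_mult_mult1 min_mult_distrib_left right_diff_distrib)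

lemma exists_ceil: fixes r e :: int assumes "0 < e" "0 < r"
  shows "\<exists>k. 1 \<le> k \<and> r \<le> k*e \<and> (k-1)*e < r"
proof -
  define q where "q = (r-1) div e"
  define s where "s = (r-1) mod e"
  have rs: "r - 1 = e*q + s" unfolding q_def s_def by simp
  have s: "0 \<le> s" "s < e" unfolding s_def using assms by auto
  have q: "0 \<le> q" unfolding q_def using assms by (simp add: pos_imp_zdiv_nonneg_iff)
  show ?thesis
    apply (rule exI[of _ "q+1"])
    using rs s q by (auto simp: algebra_simps)
qed

lemma D1:
  fixes Q r w :: int
  assumes r0: "0 < r" and Qr: "3*r + 2 \<le> Q" and w: "r \<le> nd Q w"
    and g: "gcd r (gcd w Q) = 1"
    and H: "\<forall>m. nd Q (m*r) \<le> r \<or> nd Q (m*w) < r"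
  shows False
proof -
  have Q0: "Q > 0" using r0 Qr by simp
  have wit: "\<And>m. r < nd Q (m*r) \<Longrightarrow> r \<le> nd Q (m*w) \<Longrightarrow> False"
    using H by (meson not_le)
  define h where "h = gcd (r+w) Q"
  have h0: "h > 0" unfolding h_def using Q0 by simp
  show False
  proof (cases "h = 1")
    case False
    then have h2: "h \<ge> 2" using h0 by simp
    have cop: "coprime r h"
    proof -
      have d1: "gcd r h dvd r" by simp
      have d2: "gcd r h dvd (r+w)" unfolding h_def by (meson dvd_trans gcd_dvd1 gcd_dvd2)
      have d3: "gcd r h dvd Q" unfolding h_def by (meson dvd_trans gcd_dvd2)
      have d4: "gcd r h dvd w" using d1 d2 by (metis add_diff_cancel_left' dvd_diff)
      have "gcd r h dvd gcd r (gcd w Q)" using d1 d3 d4 by simp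
      then have "gcd r h dvd 1" using g by simp
      then show ?thesis by (simp add: coprime_iff_gcd_eq_1)
    qed
    obtain j where j: "[r * j = 1] (mod h)" using cong_solve_coprime_int[OF cop] by blast
    have "(r*j) mod h = 1" using j h2 by (simp add: cong_def)
    then obtain t where t: "r*j = 1 + h*t" by (metis add.commute mult_div_mod_eq)
    define a where "a = h div 2"
    define e where "e = Q div h"
    have hQ: "h dvd Q" unfolding h_def by simp
    have Qeh: "Q = e*h" unfolding e_def using hQ by simp
    have e0: "e > 0" using Qeh Q0 h0 by (simp add: zero_less_mult_iff)
    have a1: "3*a \<ge> h" "2*a \<le> h" "a \<ge> 0" unfolding a_def using h2 by auto
    have ea1: "3*(e*a) \<ge> Q" using a1 e0 Qeh by (metis mult.left_commute mult_le_cancel_left_pos)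
    have ea2: "2*(e*a) \<le> Q" using a1 e0 Qeh by (metis mult.left_commute mult_le_cancel_left_pos)
    have ea3: "e*a \<ge> 0" using a1 e0 by simp
    define m where "m = e*(j*a)"
    have mr: "m*r = e*a + Q*(a*t)" unfolding m_def Qeh
      by (metis (no_types, lifting) t mult.commute mult.left_commute distrib_left mult.right_neutral)
    have "nd Q (m*r) = nd Q (e*a)" by (rule nd_cong) (simp add: mr)
    moreover have "r < nd Q (e*a)" by (rule nd_gt) (use ea1 ea2 ea3 Qr r0 in auto)
    ultimately have 1: "r < nd Q (m*r)" by simp
    obtain z where z: "r + w = h*z" using h_def by (metis gcd_dvd1 dvd_def)
    have "m*(r+w) = Q*(j*a*z)" unfolding m_def Qeh z by (simp add: ac_simps)
    then have "m*w = -(m*r) + Q*(j*a*z)" by (simp add: algebra_simps)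
    then have "nd Q (m*w) = nd Q (-(m*r))" by (intro nd_cong) (metis mod_mult_self2)
    also have "\<dots> = nd Q (m*r)" using nd_neg Q0 by simp
    finally show False using wit[of m] 1 by simp
  next
    case True
    then have cop: "coprime (r+w) Q" unfolding h_def by (simp add: coprime_iff_gcd_eq_1)
    obtain m1 where m1: "[(r+w) * m1 = 1] (mod Q)" using cong_solve_coprime_int[OF cop] by blast
    define \<rho> where "\<rho> = (m1*r) mod Q"
    have rho: "0 \<le> \<rho>" "\<rho> < Q" unfolding \<rho>_def using Q0 by auto
    have key1: "nd Q ((k*m1)*r) = nd Q (k*\<rho>)" for k
      by (rule nd_cong) (simp add: \<rho>_def mod_mult_right_eq mult.assoc)
    have key2: "nd Q ((k*m1)*w) = nd Q (k - k*\<rho>)" for k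
    proof (rule nd_cong')
      have a: "[k*m1*(r+w) = k] (mod Q)" using cong_scalar_left[OF m1, of k]
        by (simp add: mult.commute mult.left_commute)
      have b: "[k*m1*r = k*\<rho>] (mod Q)" unfolding \<rho>_def cong_def
        by (simp add: mod_mult_right_eq mult.assoc)
      have "[k*m1*(r+w) - k*m1*r = k - k*\<rho>] (mod Q)" using cong_diff[OF a b] .
      then show "[k*m1*w = k - k*\<rho>] (mod Q)" by (simp add: algebra_simps)
    qed
    have wit2: "\<And>k. r < nd Q (k*\<rho>) \<Longrightarrow> r \<le> nd Q (k - k*\<rho>) \<Longrightarrow> False"
      using wit key1 key2 by metis
    have "nd Q \<rho> \<le> r"
    proof (rule ccontr)
      assume "\<not> nd Q \<rho> \<le> r"
      then have c: "r < nd Q \<rho>" by simp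
      then have "r < \<rho>" "\<rho> < Q - r" using rho by (auto simp: nd_def)
      then have "r \<le> nd Q (\<rho> - 1)" using r0 by (intro nd_ge) auto
      moreover have "nd Q (1 - \<rho>) = nd Q (\<rho> - 1)" using nd_neg[OF Q0, of "\<rho> - 1"] by simp
      ultimately show False using wit2[of 1] c by simp
    qed
    then have rc: "\<rho> \<le> r \<or> Q - r \<le> \<rho>" using rho by (auto simp: nd_def)
    have rho0: "\<rho> \<noteq> 0"
    proof
      assume "\<rho> = 0"
      then have "[m1*r = 0] (mod Q)" unfolding \<rho>_def cong_def by simp
      then have "[(m1*r)*(r+w) = 0] (mod Q)" using cong_scalar_right by fastforce
      moreover have "[r*((r+w)*m1) = r] (mod Q)" using cong_scalar_left[OF m1, of r] by simp
      ultimately have "[r = 0] (mod Q)"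
        by (metis (no_types, lifting) cong_sym cong_trans mult.commute mult.left_commute)
      then have "Q dvd r" by (simp add: cong_0_iff)
      then show False using r0 Qr zdvd_imp_le by fastforce
    qed
    have rho1: "\<rho> \<noteq> 1"
    proof
      assume "\<rho> = 1"
      then have "[m1*r = 1] (mod Q)" unfolding \<rho>_def cong_def using Q0 Qr r0
        by (simp add: mod_pos_pos_trivial)
      then have A: "[(m1*r)*(r+w) = r+w] (mod Q)" using cong_scalar_right by fastforce
      moreover have B: "[r*((r+w)*m1) = r] (mod Q)" using cong_scalar_left[OF m1, of r] by simp
      ultimately have "[r + w = r] (mod Q)"
        by (metis (no_types, lifting) cong_sym cong_trans mult.commute mult.left_commute)
      then have "[w = 0] (mod Q)" using cong_add_lcancel_0 by (metis add.right_neutral)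
      then have "nd Q w = nd Q 0" by (rule nd_cong')
      then show False using w r0 by (simp add: nd_def)
    qed
    show False
    proof (cases "\<rho> \<le> r")
      case True
      define d where "d = \<rho>"
      have d: "2 \<le> d" "d \<le> r" using True rho rho0 rho1 unfolding d_def by auto
      obtain k where k: "1 \<le> k" "r \<le> k*(d-1)" "(k-1)*(d-1) < r"
        using exists_ceil[of "d-1" r] d r0 by auto
      have k2: "k \<ge> 2"
      proof (rule ccontr)
        assume "\<not> k \<ge> 2" then have "k = 1" using k by simp
        then show False using k d by simp
      qed
      have e1: "(k-1)*(d-1) = (k-2)*(d-2) + k + d - 3" by (simp add: algebra_simps)
      have e2: "(k-2)*(d-2) \<ge> 0" using k2 d by simp
      have e3: "k*d = k*(d-1) + k" by (simp add: algebra_simps)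
      have e4: "k*d = (k-1)*(d-1) + d - 1 + k" by (simp add: algebra_simps)
      have kd1: "r < k*d" using e3 k by linarith
      have kk: "k + d \<le> r + 2" using e1 e2 k(3) by linarith
      have kd2: "k*d \<le> 2*r" using e4 kk k(3) by linarith
      have "r < nd Q (k*\<rho>)" unfolding d_def[symmetric]
        by (rule nd_gt) (use kd1 kd2 Qr r0 in auto)
      moreover have "r \<le> nd Q (k - k*\<rho>)"
      proof -
        have "nd Q (k - k*\<rho>) = nd Q (k*(d-1))"
          using nd_neg[OF Q0, of "k*(d-1)"] unfolding d_def by (simp add: algebra_simps)
        also have "r \<le> nd Q (k*(d-1))" by (rule nd_ge) (use k kd2 e3 Qr r0 in auto)
        finally show ?thesis .
      qed
      ultimately show False using wit2 by blast
    next
      case False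
      then have "Q - r \<le> \<rho>" using rc by simp
      define d where "d = Q - \<rho>"
      have d: "1 \<le> d" "d \<le> r" using \<open>Q - r \<le> \<rho>\<close> rho unfolding d_def by auto
      obtain k where k: "1 \<le> k" "r+1 \<le> k*d" "(k-1)*d < r+1"
        using exists_ceil[of d "r+1"] d r0 by auto
      have k2: "k \<ge> 2"
      proof (rule ccontr)
        assume "\<not> k \<ge> 2" then have "k = 1" using k by simp
        then show False using k d by simp
      qed
      have e1: "(k-1)*d = (k-2)*(d-1) + k + d - 2" by (simp add: algebra_simps)
      have e2: "(k-2)*(d-1) \<ge> 0" using k2 d by simp
      have e3: "k*d = (k-1)*d + d" by (simp add: algebra_simps)
      have kd2: "k*d \<le> 2*r" using e3 k d by linarith
      have kk: "k + d \<le> r + 2" using e1 e2 k by linarith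
      have "nd Q (k*\<rho>) = nd Q (k*d)"
      proof -
        have "-(k*d) = k*\<rho> + Q*(-k)" by (simp add: d_def algebra_simps)
        then have "nd Q (k*\<rho>) = nd Q (-(k*d))"
          by (intro nd_cong) (metis mod_mult_self2)
        then show ?thesis using nd_neg[OF Q0] by simp
      qed
      also have "r < nd Q (k*d)" by (rule nd_gt) (use k kd2 Qr r0 in auto)
      finally have 1: "r < nd Q (k*\<rho>)" .
      have "k - k*\<rho> = k*(d+1) + Q*(-k)" by (simp add: d_def algebra_simps)
      then have "nd Q (k - k*\<rho>) = nd Q (k*(d+1))"
        by (intro nd_cong) (metis mod_mult_self2)
      also have "r \<le> nd Q (k*(d+1))" by (rule nd_ge) (use k kk kd2 Qr r0 in \<open>auto simp: algebra_simps\<close>)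
      finally show False using wit2 1 by blast
    qed
  qed
qed


lemma nd_transfer:
  fixes g Q' x :: int assumes "g > 0"
  shows "nd (g*Q') (m*(g*x)) = g * nd Q' (m*x)"
  by (metis mult.left_commute nd_scale[OF assms])

lemma D:
  fixes Q r w :: int
  assumes r0: "0 < r" and Qr: "3*r < Q" and w: "r \<le> nd Q w"
    and H: "\<forall>m. nd Q (m*r) \<le> r \<or> nd Q (m*w) < r"
  shows "\<exists>s::nat. 1 \<le> s \<and> real_of_int r / real_of_int Q = real s / real (3 * s + 1)"
proof -
  define g where "g = gcd r (gcd w Q)"
  have g0: "g > 0" using r0 by (simp add: g_def)
  obtain r' where r': "r = g*r'" unfolding g_def by (meson dvd_def gcd_dvd1)
  obtain w' where w': "w = g*w'" unfolding g_def by (meson dvd_def gcd_dvd1 gcd_dvd2 dvd_trans)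
  obtain Q' where Q': "Q = g*Q'" unfolding g_def by (meson dvd_def gcd_dvd2 dvd_trans)
  have "g = gcd (g*r') (gcd (g*w') (g*Q'))" using g_def r' w' Q' by simp
  also have "\<dots> = g * gcd r' (gcd w' Q')" using g0 by (simp add: gcd_mult_left)
  finally have g1: "gcd r' (gcd w' Q') = 1" using g0 by simp
  have r0': "0 < r'" using r0 g0 r' by (simp add: zero_less_mult_iff)
  have Qr': "3*r' < Q'" using Qr g0 r' Q' by (metis mult.left_commute mult_less_cancel_left_pos)
  have "nd Q w = g * nd Q' w'" using nd_transfer[OF g0, of Q' 1 w'] Q' w' by simp
  then have w'': "r' \<le> nd Q' w'" using w r' g0 by (metis mult_le_cancel_left_pos)
  have H': "nd Q' (m*r') \<le> r' \<or> nd Q' (m*w') < r'" for m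
  proof -
    have 1: "nd Q (m*r) = g * nd Q' (m*r')" using nd_transfer[OF g0] Q' r' by simp
    have 2: "nd Q (m*w) = g * nd Q' (m*w')" using nd_transfer[OF g0] Q' w' by simp
    show ?thesis using H[rule_format, of m] 1 2 r' g0
      by (metis mult_le_cancel_left_pos mult_less_cancel_left_pos)
  qed
  have "\<not> 3*r' + 2 \<le> Q'" using D1[OF r0' _ w'' g1] H' by blast
  then have QQ: "Q' = 3*r' + 1" using Qr' by simp
  show ?thesis
  proof (intro exI conjI)
    show "1 \<le> nat r'" using r0' by simp
    have "real_of_int r / real_of_int Q = real_of_int r' / real_of_int Q'"
      using r' Q' g0 by simp
    also have "\<dots> = real (nat r') / real (3 * nat r' + 1)" using QQ r0' by simp
    finally show "real_of_int r / real_of_int Q = real (nat r') / real (3 * nat r' + 1)" .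
  qed
qed

lemma D2:
  fixes Q r :: int
  assumes r0: "0 < r" and Qr: "2*r < Q" and H: "\<forall>m. nd Q (m*r) \<le> r"
  shows "\<exists>s::nat. 1 \<le> s \<and> real_of_int r / real_of_int Q = real s / real (2 * s + 1)"
proof -
  define g where "g = gcd r Q"
  have g0: "g > 0" using r0 by (simp add: g_def)
  obtain r' where r': "r = g*r'" unfolding g_def by (meson dvd_def gcd_dvd1)
  obtain Q' where Q': "Q = g*Q'" unfolding g_def by (meson dvd_def gcd_dvd2)
  have "g = gcd (g*r') (g*Q')" using g_def r' Q' by simp
  also have "\<dots> = g * gcd r' Q'" using g0 by (simp add: gcd_mult_left)
  finally have g1: "gcd r' Q' = 1" using g0 by simp
  then have cop: "coprime r' Q'" by (simp add: coprime_iff_gcd_eq_1)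
  have r0': "0 < r'" using r0 g0 r' by (simp add: zero_less_mult_iff)
  have Qr': "2*r' < Q'" using Qr g0 r' Q' by (metis mult.left_commute mult_less_cancel_left_pos)
  obtain j where j: "[r' * j = 1] (mod Q')" using cong_solve_coprime_int[OF cop] by blast
  define m where "m = j * (Q' div 2)"
  have "[r' * j * (Q' div 2) = 1 * (Q' div 2)] (mod Q')" using cong_scalar_right[OF j] .
  then have "[m * r' = Q' div 2] (mod Q')" unfolding m_def by (simp add: ac_simps)
  then have "nd Q' (m*r') = nd Q' (Q' div 2)" by (rule nd_cong')
  also have "\<dots> = Q' div 2" using Qr' r0' by (simp add: nd_def)
  finally have 1: "nd Q' (m*r') = Q' div 2" .
  have "nd Q (m*r) = g * nd Q' (m*r')" using nd_transfer[OF g0] Q' r' by simp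
  then have "Q' div 2 \<le> r'" using H 1 r' g0 by (metis mult_le_cancel_left_pos)
  then have QQ: "Q' = 2*r' + 1" using Qr' by linarith
  show ?thesis
  proof (intro exI conjI)
    show "1 \<le> nat r'" using r0' by simp
    have "real_of_int r / real_of_int Q = real_of_int r' / real_of_int Q'"
      using r' Q' g0 by simp
    also have "\<dots> = real (nat r') / real (2 * nat r' + 1)" using QQ r0' by simp
    finally show "real_of_int r / real_of_int Q = real (nat r') / real (2 * nat r' + 1)" .
  qed
qed





lemma dist_int_frac: "dist_int x = min (frac x) (1 - frac x)"
proof (cases "x \<in> \<int>")
  case True
  then obtain n where n: "x = of_int n" by (auto elim: Ints_cases)
  then show ?thesis by (simp add: dist_int_def frac_def)
next
  case False
  then have "x \<noteq> of_int \<lfloor>x\<rfloor>" by (metis Ints_of_int)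
  then have "\<lceil>x\<rceil> = \<lfloor>x\<rfloor> + 1" by (simp add: ceiling_altdef)
  then show ?thesis by (simp add: dist_int_def frac_def)
qed

lemma dist_int_le: "dist_int x \<le> \<bar>x - of_int n\<bar>"
proof (cases "n \<le> \<lfloor>x\<rfloor>")
  case True
  then have "frac x \<le> x - of_int n" unfolding frac_def by linarith
  then show ?thesis unfolding dist_int_frac by linarith
next
  case False
  then have "n \<ge> \<lfloor>x\<rfloor> + 1" by simp
  then have "1 - frac x \<le> of_int n - x" unfolding frac_def by linarith
  then show ?thesis unfolding dist_int_frac by linarith
qed

lemma dist_int_attained: "\<exists>n. dist_int x = \<bar>x - of_int n\<bar>"
proof -
  have f: "0 \<le> frac x" "frac x < 1" by (auto simp: frac_lt_1)
  show ?thesis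
  proof (cases "frac x \<le> 1 - frac x")
    case True
    then have "dist_int x = \<bar>x - of_int \<lfloor>x\<rfloor>\<bar>" unfolding dist_int_frac using f by (simp add: frac_def)
    then show ?thesis by blast
  next
    case False
    then have "dist_int x = \<bar>x - of_int (\<lfloor>x\<rfloor> + 1)\<bar>" unfolding dist_int_frac using f
      by (simp add: frac_def)
    then show ?thesis by blast
  qed
qed

lemma dist_int_lip: "\<bar>dist_int x - dist_int y\<bar> \<le> \<bar>x - y\<bar>"
proof -
  obtain n where n: "dist_int y = \<bar>y - of_int n\<bar>" using dist_int_attained by blast
  obtain k where k: "dist_int x = \<bar>x - of_int k\<bar>" using dist_int_attained by blast
  have a1: "dist_int x \<le> \<bar>x - of_int n\<bar>" by (rule dist_int_le)
  have a2: "\<bar>x - of_int n\<bar> \<le> \<bar>x - y\<bar> + \<bar>y - of_int n\<bar>"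
    using abs_triangle_ineq[of "x - y" "y - of_int n"] by simp
  have b1: "dist_int y \<le> \<bar>y - of_int k\<bar>" by (rule dist_int_le)
  have b2: "\<bar>y - of_int k\<bar> \<le> \<bar>y - x\<bar> + \<bar>x - of_int k\<bar>"
    using abs_triangle_ineq[of "y - x" "x - of_int k"] by simp
  have b3: "\<bar>y - x\<bar> = \<bar>x - y\<bar>" by (rule abs_minus_commute)
  have c1: "dist_int x \<le> \<bar>x - y\<bar> + dist_int y" using a1 a2 unfolding n[symmetric] by (rule order_trans)
  have c2: "dist_int y \<le> \<bar>x - y\<bar> + dist_int x" using b1 b2 unfolding k[symmetric] b3 by (rule order_trans)
  show ?thesis unfolding abs_le_iff using c1 c2 by simp
qed

lemma dist_int_nonneg: "0 \<le> dist_int x"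
  unfolding dist_int_frac by (simp add: frac_lt_1 less_imp_le)

lemma dist_int_half: "dist_int x \<le> 1/2"
  unfolding dist_int_frac min_def by auto

lemma dist_int_neg: "dist_int (-x) = dist_int x"
proof (cases "x \<in> \<int>")
  case True
  then have a: "frac x = 0" by (simp add: frac_eq_0_iff)
  have b: "frac (-x) = 0" by (simp add: frac_neg True)
  show ?thesis unfolding dist_int_frac a b ..
next
  case False
  then show ?thesis by (simp add: dist_int_frac frac_neg min.commute)
qed

lemma dist_int_div:
  fixes x Q :: int assumes "Q > 0"
  shows "dist_int (of_int x / of_int Q) = of_int (nd Q x) / of_int Q"
proof -
  have fl: "\<lfloor>(of_int x / of_int Q :: real)\<rfloor> = x div Q" by (rule floor_divide_of_int_eq)
  have "frac (of_int x / of_int Q :: real) = of_int x / of_int Q - of_int (x div Q)"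
    unfolding frac_def fl ..
  also have "\<dots> = of_int (x mod Q) / of_int Q"
  proof -
    have "x = Q * (x div Q) + x mod Q" by simp
    then have "(of_int x :: real) = of_int Q * of_int (x div Q) + of_int (x mod Q)"
      by (metis of_int_add of_int_mult)
    then show ?thesis using assms by (simp add: field_simps)
  qed
  finally have fr: "frac (of_int x / of_int Q :: real) = of_int (x mod Q) / of_int Q" .
  have h1: "1 - of_int (x mod Q) / of_int Q = (of_int (Q - x mod Q) :: real) / of_int Q"
    using assms by (simp add: field_simps)
  have e: "of_int (nd Q x) / (of_int Q::real) = min (of_int (x mod Q) / of_int Q) (of_int (Q - x mod Q) / of_int Q)"
    unfolding nd_def of_int_min min_divide_distrib_right using assms by simp
  show ?thesis unfolding dist_int_frac fr e h1 ..
qed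


lemma frac_div_int:
  fixes x Q :: int assumes "Q > 0"
  shows "frac (of_int x / of_int Q :: real) = of_int (x mod Q) / of_int Q"
proof -
  have fl: "\<lfloor>(of_int x / of_int Q :: real)\<rfloor> = x div Q" by (rule floor_divide_of_int_eq)
  have "x = Q * (x div Q) + x mod Q" by simp
  then have "(of_int x :: real) = of_int Q * of_int (x div Q) + of_int (x mod Q)"
    by (metis of_int_add of_int_mult)
  then show ?thesis unfolding frac_def fl using assms by (simp add: field_simps)
qed

lemma dist_int_add_int: "dist_int (x + of_int n) = dist_int x"
  unfolding dist_int_frac by simp

definition F :: "nat set \<Rightarrow> real \<Rightarrow> real" where
  "F S t = Min ((\<lambda>v. dist_int (t * real v)) ` S)"

lemma F_le: "finite S \<Longrightarrow> v \<in> S \<Longrightarrow> F S t \<le> dist_int (t * real v)"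
  unfolding F_def by simp

lemma F_gt_iff: "finite S \<Longrightarrow> S \<noteq> {} \<Longrightarrow> c < F S t \<longleftrightarrow> (\<forall>v\<in>S. c < dist_int (t * real v))"
  unfolding F_def by simp

lemma F_in: "finite S \<Longrightarrow> S \<noteq> {} \<Longrightarrow> \<exists>v\<in>S. F S t = dist_int (t * real v)"
proof -
  assume "finite S" "S \<noteq> {}"
  then have "F S t \<in> (\<lambda>v. dist_int (t * real v)) ` S" unfolding F_def by (intro Min_in) auto
  then show ?thesis by auto
qed

lemma F_half: "finite S \<Longrightarrow> S \<noteq> {} \<Longrightarrow> F S t \<le> 1/2"
  using F_in dist_int_half by metis

lemma cont_dist: "continuous_on UNIV (\<lambda>t. dist_int (t * real v))"
proof (rule lipschitz_on_continuous_on)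
  show "lipschitz_on (real v) UNIV (\<lambda>t. dist_int (t * real v))"
  proof (rule lipschitz_onI)
    fix x y :: real
    have "\<bar>dist_int (x * real v) - dist_int (y * real v)\<bar> \<le> \<bar>x * real v - y * real v\<bar>"
      by (rule dist_int_lip)
    also have "\<dots> = real v * \<bar>x - y\<bar>" by (simp add: abs_mult left_diff_distrib[symmetric])
    finally show "dist (dist_int (x * real v)) (dist_int (y * real v)) \<le> real v * dist x y"
      by (simp add: dist_real_def)
  qed simp
qed

lemma F_cont: "finite S \<Longrightarrow> S \<noteq> {} \<Longrightarrow> continuous_on UNIV (F S)"
proof (induction S rule: finite_ne_induct)
  case (singleton x)
  then show ?case unfolding F_def using cont_dist by simp
next
  case (insert x A)
  have "F (insert x A) = (\<lambda>t. min (dist_int (t * real x)) (F A t))"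
    unfolding F_def using insert by (auto simp: Min_insert)
  then show ?case using insert cont_dist continuous_on_min by metis
qed

lemma F_periodic: "F S (t + of_int n) = F S t"
proof -
  have "dist_int ((t + of_int n) * real v) = dist_int (t * real v)" for v
  proof -
    have "(t + of_int n) * real v = t * real v + of_int (n * int v)" by (simp add: algebra_simps)
    then show ?thesis by (metis dist_int_add_int)
  qed
  then show ?thesis unfolding F_def by simp
qed

lemma F_attains:
  assumes "finite S" "S \<noteq> {}"
  shows "\<exists>t0. (\<forall>t. F S t \<le> F S t0) \<and> Sup (range (F S)) = F S t0"
proof -
  have "continuous_on {0..1} (F S)" using F_cont[OF assms] continuous_on_subset by blast
  then obtain x where x: "x \<in> {0..1}" "\<forall>y\<in>{0..1}. F S y \<le> F S x"
    using continuous_attains_sup[of "{0..1::real}" "F S"] by auto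
  have all: "F S t \<le> F S x" for t
  proof -
    have "F S t = F S (t + of_int (- \<lfloor>t\<rfloor>))" using F_periodic by metis
    also have "\<dots> \<le> F S x" using x(2) by (simp add: frac_lt_1[unfolded frac_def] less_imp_le)
    finally show ?thesis .
  qed
  have "Sup (range (F S)) = F S x" by (rule cSup_eq_maximum) (use all in auto)
  then show ?thesis using all by blast
qed

lemma F_pos:
  assumes "finite S" "S \<noteq> {}" "\<forall>v\<in>S. 0 < v"
  shows "\<exists>t. 0 < F S t"
proof -
  define M where "M = Max S"
  have M: "0 < M" "\<forall>v\<in>S. v \<le> M" using assms unfolding M_def by (auto simp: Max_ge_iff)
  define t where "t = 1 / (2 * real M)"
  have "0 < F S t"
  proof (subst F_gt_iff[OF assms(1,2)], intro ballI)
    fix v assume v: "v \<in> S"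
    have a: "0 < t * real v" using v assms M unfolding t_def by simp
    have b: "t * real v \<le> 1/2" using v M unfolding t_def by (simp add: field_simps)
    have "frac (t * real v) = t * real v" using a b by (simp add: frac_eq)
    then show "0 < dist_int (t * real v)" unfolding dist_int_frac using a b by simp
  qed
  then show ?thesis by blast
qed


lemma improve:
  assumes fin: "finite S" and ne: "S \<noteq> {}" and pos: "\<forall>v\<in>S. 0 < v"
    and bound: "\<forall>t. F S t \<le> \<delta>" and d: "\<delta> < 1/2"
    and H: "\<forall>v\<in>S. \<delta> < dist_int (t * real v) \<or> frac (t * real v) = \<delta>"
  shows False
proof -
  define g where "g v = (if \<delta> < dist_int (t * real v) then min (dist_int (t * real v) - \<delta>) (1 - 2*\<delta>) else 1 - 2*\<delta>)" for v
  define \<eta> where "\<eta> = Min (g ` S)"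
  have gpos: "0 < g v" for v unfolding g_def using d by auto
  have eta0: "0 < \<eta>" unfolding \<eta>_def using fin ne gpos by simp
  have eta_le: "\<eta> \<le> g v" if "v \<in> S" for v unfolding \<eta>_def using fin that by simp
  define M where "M = Max S"
  have M: "0 < M" "\<forall>v\<in>S. v \<le> M" using fin ne pos unfolding M_def by (auto simp: Max_ge_iff)
  define u where "u = \<eta> / (2 * real M)"
  have u0: "0 < u" unfolding u_def using eta0 M by simp
  have uv: "0 < u * real v" "u * real v < \<eta>" if "v \<in> S" for v
  proof -
    show "0 < u * real v" using u0 pos that by simp
    have "real v \<le> real M" using M that by simp
    then have "u * real v \<le> u * real M" using u0 by (simp add: mult_left_mono)
    also have "\<dots> = \<eta> / 2" unfolding u_def using M by simp
    finally show "u * real v < \<eta>" using eta0 by simp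
  qed
  have "\<delta> < F S (t + u)"
  proof (subst F_gt_iff[OF fin ne], intro ballI)
    fix v assume v: "v \<in> S"
    have tu: "(t + u) * real v = t * real v + u * real v" by (simp add: algebra_simps)
    show "\<delta> < dist_int ((t + u) * real v)"
    proof (cases "\<delta> < dist_int (t * real v)")
      case True
      then have "u * real v < dist_int (t * real v) - \<delta>"
        using uv[OF v] eta_le[OF v] unfolding g_def by simp
      moreover have "\<bar>dist_int (t * real v + u * real v) - dist_int (t * real v)\<bar> \<le> \<bar>u * real v\<bar>"
        using dist_int_lip[of "t * real v + u * real v" "t * real v"] by simp
      ultimately show ?thesis unfolding tu using uv[OF v] by linarith
    next
      case False
      then have fr: "frac (t * real v) = \<delta>" using H v by auto
      have e1: "u * real v < 1 - 2*\<delta>" using uv[OF v] eta_le[OF v] False unfolding g_def by simp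
      have d0: "0 \<le> \<delta>" using fr frac_ge_0 by metis
      have "frac (t * real v + u * real v) = \<delta> + u * real v"
      proof (subst frac_unique_iff, intro conjI)
        have "t * real v + u * real v - (\<delta> + u * real v) = t * real v - frac (t * real v)"
          using fr by simp
        also have "\<dots> \<in> \<int>" unfolding frac_def by simp
        finally show "t * real v + u * real v - (\<delta> + u * real v) \<in> \<int>" .
        show "0 \<le> \<delta> + u * real v" using d0 uv[OF v] by simp
        show "\<delta> + u * real v < 1" using e1 d0 by simp
      qed
      then show ?thesis unfolding tu dist_int_frac using e1 uv[OF v] by simp
    qed
  qed
  then show False using bound by (meson not_le)
qed

lemma improve_neg:
  assumes fin: "finite S" and ne: "S \<noteq> {}" and pos: "\<forall>v\<in>S. 0 < v"
    and bound: "\<forall>t. F S t \<le> \<delta>" and d: "\<delta> < 1/2" and d0: "0 < \<delta>"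
    and H: "\<forall>v\<in>S. \<delta> < dist_int (t * real v) \<or> frac (t * real v) = 1 - \<delta>"
  shows False
proof (rule improve[OF fin ne pos bound d])
  show "\<forall>v\<in>S. \<delta> < dist_int ((-t) * real v) \<or> frac ((-t) * real v) = \<delta>"
  proof
    fix v assume v: "v \<in> S"
    have a: "dist_int ((-t) * real v) = dist_int (t * real v)" using dist_int_neg by simp
    show "\<delta> < dist_int ((-t) * real v) \<or> frac ((-t) * real v) = \<delta>"
    proof (cases "\<delta> < dist_int (t * real v)")
      case True then show ?thesis using a by simp
    next
      case False
      then have fr: "frac (t * real v) = 1 - \<delta>" using H v by auto
      then have "frac (t * real v) \<noteq> 0" using d by simp
      then have "frac (-(t * real v)) = 1 - frac (t * real v)" by (rule frac_non_zero)
      then have "frac (-(t * real v)) = \<delta>" using fr by simp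
      then show ?thesis by simp
    qed
  qed
qed

lemma crossing:
  assumes fin: "finite S" and ne: "S \<noteq> {}" and pos: "\<forall>v\<in>S. 0 < v"
    and bound: "\<forall>t. F S t \<le> \<delta>" and t0: "F S t0 = \<delta>" and d: "\<delta> < 1/2" and d0: "0 < \<delta>"
  shows "\<exists>p\<in>S. \<exists>q\<in>S. frac (t0 * real p) = \<delta> \<and> frac (t0 * real q) = 1 - \<delta>"
proof -
  have ge: "\<delta> \<le> dist_int (t0 * real v)" if "v \<in> S" for v using F_le[OF fin that, of t0] t0 by linarith
  have eqc: "frac (t0 * real v) = \<delta> \<or> frac (t0 * real v) = 1 - \<delta>"
    if "v \<in> S" "\<not> \<delta> < dist_int (t0 * real v)" for v
  proof -
    have "dist_int (t0 * real v) = \<delta>" using ge[OF that(1)] that(2) by simp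
    then show ?thesis unfolding dist_int_frac by (auto simp: min_def split: if_splits)
  qed
  have p: "\<exists>p\<in>S. frac (t0 * real p) = \<delta>"
  proof (rule ccontr)
    assume "\<not> ?thesis"
    then have "\<forall>v\<in>S. \<delta> < dist_int (t0 * real v) \<or> frac (t0 * real v) = 1 - \<delta>" using eqc by blast
    then show False using improve_neg[OF fin ne pos bound d d0] by blast
  qed
  have q: "\<exists>q\<in>S. frac (t0 * real q) = 1 - \<delta>"
  proof (rule ccontr)
    assume "\<not> ?thesis"
    then have "\<forall>v\<in>S. \<delta> < dist_int (t0 * real v) \<or> frac (t0 * real v) = \<delta>" using eqc by blast
    then show False using improve[OF fin ne pos bound d] by blast
  qed
  show ?thesis using p q by blast
qed



lemma div_le_iff_int: "0 < (Q::int) \<Longrightarrow> (of_int a / of_int Q \<le> (of_int b / of_int Q :: real)) \<longleftrightarrow> a \<le> b"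
  by (simp add: divide_le_cancel)

lemma div_less_iff_int: "0 < (Q::int) \<Longrightarrow> (of_int a / of_int Q < (of_int b / of_int Q :: real)) \<longleftrightarrow> a < b"
  by (simp add: divide_less_cancel)

lemma bridge:
  fixes p q :: nat and t0 \<delta> :: real
  assumes fp: "frac (t0 * real p) = \<delta>" and fq: "frac (t0 * real q) = 1 - \<delta>" and pq: "0 < p + q"
  shows "t0 = of_int (\<lfloor>t0 * real p\<rfloor> + \<lfloor>t0 * real q\<rfloor> + 1) / of_int (int (p + q))"
proof -
  have a: "t0 * real p = of_int \<lfloor>t0 * real p\<rfloor> + \<delta>" using fp unfolding frac_def by simp
  have b: "t0 * real q = of_int \<lfloor>t0 * real q\<rfloor> + 1 - \<delta>" using fq unfolding frac_def by simp
  have "t0 * real (p + q) = of_int (\<lfloor>t0 * real p\<rfloor> + \<lfloor>t0 * real q\<rfloor> + 1)"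
    using a b by (simp add: algebra_simps)
  moreover have "real (p + q) \<noteq> 0" using pq by (simp only: of_nat_eq_0_iff)
  ultimately show ?thesis by (simp add: eq_divide_eq)
qed

lemma dist_at:
  fixes K Q m :: int
  assumes "t0 = of_int K / of_int Q" "Q > 0"
  shows "dist_int (of_int m * t0 * real v) = of_int (nd Q (m * K * int v)) / of_int Q"
proof -
  have "of_int m * t0 * real v = of_int (m * K * int v) / of_int Q" using assms by simp
  then show ?thesis using dist_int_div[OF assms(2), of "m * K * int v"] by metis
qed

lemma part2:
  fixes v1 v2 v3 :: nat assumes pos3: "0 < v1" "0 < v2" "0 < v3"
  shows "(\<exists>s::nat. s \<ge> 1 \<and> max_loneliness [v1, v2, v3] = real s / real (3 * s + 1))
             \<or> max_loneliness [v1, v2, v3] \<ge> 1 / 3"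
proof -
  define S where "S = set [v1,v2,v3]"
  have fin: "finite S" and ne: "S \<noteq> {}" and pos: "\<forall>v\<in>S. 0 < v" using pos3 unfolding S_def by auto
  have MLeq: "max_loneliness [v1,v2,v3] = Sup (range (F S))" unfolding max_loneliness_def F_def S_def ..
  obtain t0 where t0: "\<forall>t. F S t \<le> F S t0" "Sup (range (F S)) = F S t0" using F_attains[OF fin ne] by blast
  define \<delta> where "\<delta> = F S t0"
  have bound: "\<forall>t. F S t \<le> \<delta>" using t0 unfolding \<delta>_def by simp
  have MLd: "max_loneliness [v1,v2,v3] = \<delta>" using MLeq t0 unfolding \<delta>_def by simp
  have d0: "0 < \<delta>" using F_pos[OF fin ne pos] bound by (meson less_le_trans)
  show ?thesis
  proof (cases "\<delta> < 1/3")
    case False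
    then show ?thesis using MLd by simp
  next
    case True
    have d: "\<delta> < 1/2" using True by simp
    obtain p q where p: "p \<in> S" and q: "q \<in> S" and fp: "frac (t0 * real p) = \<delta>" and fq: "frac (t0 * real q) = 1 - \<delta>"
      using crossing[OF fin ne pos bound \<delta>_def[symmetric] d d0] by blast
    have pq: "p \<noteq> q" using fp fq d by auto
    have "\<exists>c\<in>S. \<forall>v\<in>S. v = p \<or> v = q \<or> v = c"
    proof (cases "v1 = p \<or> v1 = q")
      case True
      show ?thesis
      proof (cases "v2 = p \<or> v2 = q")
        case True
        then show ?thesis using \<open>v1 = p \<or> v1 = q\<close> unfolding S_def by auto
      next
        case False
        then show ?thesis using \<open>v1 = p \<or> v1 = q\<close> p q pq unfolding S_def by auto
      qed
    next
      case False
      then show ?thesis using p q pq unfolding S_def by auto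
    qed
    then obtain c where cS: "c \<in> S" and c: "\<forall>v\<in>S. v = p \<or> v = q \<or> v = c" by blast
    define K where "K = \<lfloor>t0 * real p\<rfloor> + \<lfloor>t0 * real q\<rfloor> + 1"
    define Q where "Q = int (p + q)"
    have Q0: "0 < Q" unfolding Q_def using pos p by auto
    have t0K: "t0 = of_int K / of_int Q" unfolding K_def Q_def
      using bridge[OF fp fq] pos p by simp
    define r where "r = (K * int p) mod Q"
    define w where "w = K * int c"
    have dr: "\<delta> = of_int r / of_int Q"
    proof -
      have "t0 * real p = of_int (K * int p) / of_int Q" using t0K by simp
      then show ?thesis using fp frac_div_int[OF Q0, of "K * int p"] unfolding r_def by simp
    qed
    have r0: "0 < r" using d0 dr Q0 div_less_iff_int[OF Q0, of 0 r] by simp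
    have Qr: "3 * r < Q"
    proof -
      have "of_int r / of_int Q < (1/3::real)" using dr True by simp
      then have "3 * of_int r < (of_int Q :: real)" using Q0 by (simp add: field_simps)
      then show ?thesis by linarith
    qed
    have dp: "dist_int (of_int m * t0 * real p) = of_int (nd Q (m * r)) / of_int Q" for m
    proof -
      have "nd Q (m * K * int p) = nd Q (m * r)" unfolding r_def
        by (rule nd_cong) (simp add: mod_mult_right_eq mult.assoc)
      then show ?thesis using dist_at[OF t0K Q0] by simp
    qed
    have dq: "dist_int (of_int m * t0 * real q) = of_int (nd Q (m * r)) / of_int Q" for m
    proof -
      have "m * K * int q = -(m * K * int p) + Q * (m * K)" unfolding Q_def by (simp add: algebra_simps)
      then have "nd Q (m * K * int q) = nd Q (-(m * K * int p))" by (intro nd_cong) (metis mod_mult_self2)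
      also have "\<dots> = nd Q (m * K * int p)" using nd_neg[OF Q0] by simp
      also have "\<dots> = nd Q (m * r)" unfolding r_def
        by (rule nd_cong) (simp add: mod_mult_right_eq mult.assoc)
      finally show ?thesis using dist_at[OF t0K Q0] by simp
    qed
    have dc: "dist_int (of_int m * t0 * real c) = of_int (nd Q (m * w)) / of_int Q" for m
      using dist_at[OF t0K Q0] unfolding w_def by (simp add: mult.assoc)
    have w: "r \<le> nd Q w"
    proof -
      have "\<delta> \<le> dist_int (of_int 1 * t0 * real c)" using F_le[OF fin cS, of t0] \<delta>_def by simp
      then have "of_int r / of_int Q \<le> (of_int (nd Q w) / of_int Q :: real)" using dc[of 1] dr by simp
      then show ?thesis using div_le_iff_int[OF Q0] by simp
    qed
    have H: "\<forall>m. nd Q (m*r) \<le> r \<or> nd Q (m*w) < r"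
    proof (rule allI, rule ccontr)
      fix m assume "\<not> (nd Q (m*r) \<le> r \<or> nd Q (m*w) < r)"
      then have A: "r < nd Q (m*r)" and B: "r \<le> nd Q (m*w)" by auto
      define T where "T = of_int m * t0"
      have farp: "\<delta> < dist_int (T * real p)" "\<delta> < dist_int (T * real q)"
        unfolding T_def dp dq dr using A div_less_iff_int[OF Q0] by auto
      have gec: "\<delta> \<le> dist_int (T * real c)"
        unfolding T_def dc dr using B div_le_iff_int[OF Q0] by auto
      show False
      proof (cases "frac (T * real c) = \<delta>")
        case True
        have "\<forall>v\<in>S. \<delta> < dist_int (T * real v) \<or> frac (T * real v) = \<delta>"
        proof
          fix v assume "v \<in> S"
          then have "v = p \<or> v = q \<or> v = c" using c by blast
          then show "\<delta> < dist_int (T * real v) \<or> frac (T * real v) = \<delta>"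
            using farp True by (elim disjE) simp_all
        qed
        then show False using improve[OF fin ne pos bound d] by blast
      next
        case False
        have "\<delta> < dist_int (T * real c) \<or> frac (T * real c) = 1 - \<delta>"
        proof (cases "\<delta> < dist_int (T * real c)")
          case False
          then have "dist_int (T * real c) = \<delta>" using gec by simp
          then show ?thesis using \<open>frac (T * real c) \<noteq> \<delta>\<close> unfolding dist_int_frac
            by (auto simp: min_def split: if_splits)
        qed simp
        then have cc: "\<delta> < dist_int (T * real c) \<or> frac (T * real c) = 1 - \<delta>" .
        have "\<forall>v\<in>S. \<delta> < dist_int (T * real v) \<or> frac (T * real v) = 1 - \<delta>"
        proof
          fix v assume "v \<in> S"
          then have "v = p \<or> v = q \<or> v = c" using c by blast
          then show "\<delta> < dist_int (T * real v) \<or> frac (T * real v) = 1 - \<delta>"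
            using farp cc by (elim disjE) simp_all
        qed
        then show False using improve_neg[OF fin ne pos bound d d0] by blast
      qed
    qed
    obtain s :: nat where s: "1 \<le> s" "of_int r / of_int Q = real s / real (3 * s + 1)"
      using D[OF r0 Qr w H] by blast
    then show ?thesis using MLd dr by auto
  qed
qed

lemma part1:
  fixes v1 v2 :: nat assumes pos2: "0 < v1" "0 < v2"
  shows "(\<exists>s::nat. s \<ge> 1 \<and> max_loneliness [v1, v2] = real s / real (2 * s + 1))
             \<or> max_loneliness [v1, v2] = 1 / 2"
proof -
  define S where "S = set [v1,v2]"
  have fin: "finite S" and ne: "S \<noteq> {}" and pos: "\<forall>v\<in>S. 0 < v" using pos2 unfolding S_def by auto
  have MLeq: "max_loneliness [v1,v2] = Sup (range (F S))" unfolding max_loneliness_def F_def S_def ..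
  obtain t0 where t0: "\<forall>t. F S t \<le> F S t0" "Sup (range (F S)) = F S t0" using F_attains[OF fin ne] by blast
  define \<delta> where "\<delta> = F S t0"
  have bound: "\<forall>t. F S t \<le> \<delta>" using t0 unfolding \<delta>_def by simp
  have MLd: "max_loneliness [v1,v2] = \<delta>" using MLeq t0 unfolding \<delta>_def by simp
  have d0: "0 < \<delta>" using F_pos[OF fin ne pos] bound by (meson less_le_trans)
  have dh: "\<delta> \<le> 1/2" unfolding \<delta>_def using F_half[OF fin ne] by blast
  show ?thesis
  proof (cases "\<delta> = 1/2")
    case True
    then show ?thesis using MLd by simp
  next
    case False
    then have d: "\<delta> < 1/2" using dh by simp
    obtain p q where p: "p \<in> S" and q: "q \<in> S" and fp: "frac (t0 * real p) = \<delta>" and fq: "frac (t0 * real q) = 1 - \<delta>"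
      using crossing[OF fin ne pos bound \<delta>_def[symmetric] d d0] by blast
    have pq: "p \<noteq> q" using fp fq d by auto
    have c: "\<forall>v\<in>S. v = p \<or> v = q" using p q pq unfolding S_def by auto
    define K where "K = \<lfloor>t0 * real p\<rfloor> + \<lfloor>t0 * real q\<rfloor> + 1"
    define Q where "Q = int (p + q)"
    have Q0: "0 < Q" unfolding Q_def using pos p by auto
    have t0K: "t0 = of_int K / of_int Q" unfolding K_def Q_def
      using bridge[OF fp fq] pos p by simp
    define r where "r = (K * int p) mod Q"
    have dr: "\<delta> = of_int r / of_int Q"
    proof -
      have "t0 * real p = of_int (K * int p) / of_int Q" using t0K by simp
      then show ?thesis using fp frac_div_int[OF Q0, of "K * int p"] unfolding r_def by simp
    qed
    have r0: "0 < r" using d0 dr Q0 div_less_iff_int[OF Q0, of 0 r] by simp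
    have Qr: "2 * r < Q"
    proof -
      have "of_int r / of_int Q < (1/2::real)" using dr d by simp
      then have "2 * of_int r < (of_int Q :: real)" using Q0 by (simp add: field_simps)
      then show ?thesis by linarith
    qed
    have dp: "dist_int (of_int m * t0 * real p) = of_int (nd Q (m * r)) / of_int Q" for m
    proof -
      have "nd Q (m * K * int p) = nd Q (m * r)" unfolding r_def
        by (rule nd_cong) (simp add: mod_mult_right_eq mult.assoc)
      then show ?thesis using dist_at[OF t0K Q0] by simp
    qed
    have dq: "dist_int (of_int m * t0 * real q) = of_int (nd Q (m * r)) / of_int Q" for m
    proof -
      have "m * K * int q = -(m * K * int p) + Q * (m * K)" unfolding Q_def by (simp add: algebra_simps)
      then have "nd Q (m * K * int q) = nd Q (-(m * K * int p))" by (intro nd_cong) (metis mod_mult_self2)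
      also have "\<dots> = nd Q (m * K * int p)" using nd_neg[OF Q0] by simp
      also have "\<dots> = nd Q (m * r)" unfolding r_def
        by (rule nd_cong) (simp add: mod_mult_right_eq mult.assoc)
      finally show ?thesis using dist_at[OF t0K Q0] by simp
    qed
    have H: "\<forall>m. nd Q (m*r) \<le> r"
    proof
      fix m
      obtain v where v: "v \<in> S" "F S (of_int m * t0) = dist_int (of_int m * t0 * real v)"
        using F_in[OF fin ne] by blast
      have "v = p \<or> v = q" using c v(1) by blast
      then have "dist_int (of_int m * t0 * real v) = of_int (nd Q (m * r)) / of_int Q"
        using dp dq by (elim disjE) simp_all
      then have "of_int (nd Q (m * r)) / of_int Q \<le> (of_int r / of_int Q :: real)"
        using v(2) bound dr by metis
      then show "nd Q (m*r) \<le> r" using div_le_iff_int[OF Q0] by simp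
    qed
    obtain s :: nat where s: "1 \<le> s" "of_int r / of_int Q = real s / real (2 * s + 1)"
      using D2[OF r0 Qr H] by blast
    then show ?thesis using MLd dr by auto
  qed
qed

theorem theorem2p1:
  shows "(\<forall>v1 v2 :: nat. v1 > 0 \<longrightarrow> v2 > 0 \<longrightarrow>
            ((\<exists>s::nat. s \<ge> 1 \<and> max_loneliness [v1, v2] = real s / real (2 * s + 1))
             \<or> max_loneliness [v1, v2] = 1 / 2))
       \<and> (\<forall>v1 v2 v3 :: nat. v1 > 0 \<longrightarrow> v2 > 0 \<longrightarrow> v3 > 0 \<longrightarrow>
            ((\<exists>s::nat. s \<ge> 1 \<and> max_loneliness [v1, v2, v3] = real s / real (3 * s + 1))
             \<or> max_loneliness [v1, v2, v3] \<ge> 1 / 3))"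
  using part1 part2 by blast

end
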